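(* Let $\mathfrak g$ be a complex semisimple Lie algebra, $\mathfrak h \subset \mathfrak g$ a Cartan subalgebra, and $\rho : \mathfrak g \to \mathrm{End}(W)$ a finite-dimensional representation. Then $W \otimes \mathfrak g$ is generated, as a $\mathfrak g$-module, by $W \otimes \mathfrak h$.
   Context: $W \otimes \mathfrak g$ is a $\mathfrak g$-module via $(\rho\otimes \mathrm{ad})(\xi)(w\otimes \eta) = \rho(\xi)w \otimes \eta + w \otimes [\xi,\eta]$. *)

theory Defs
  imports "HOL-Analysis.Analysis"
begin

text \<open>Concrete model: a finite-dimensional complex Lie algebra is a Lie subalgebra
  g of gl_n(C) = complex^'n^'n (every semisimple one embeds faithfully via ad). W \<otimes> gl_n is realised as complex^'n^'n^'m, and
  W \<otimes> g as the complex span of the pure tensors w \<otimes> x with x in g.\<close>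

type_synonym 'n mat = "complex^'n^'n"

definition mscale :: "complex \<Rightarrow> 'n::finite mat \<Rightarrow> 'n mat" where
  "mscale c M = (\<chi> i j. c * M$i$j)"

definition tscale :: "complex \<Rightarrow> complex^'n^'n^'m \<Rightarrow> complex^'n^'n^'m" where
  "tscale c T = (\<chi> k. mscale c (T$k))"

definition comm :: "'n::finite mat \<Rightarrow> 'n mat \<Rightarrow> 'n mat" where
  "comm x y = x ** y - y ** x"

definition lie_subalgebra :: "'n::finite mat set \<Rightarrow> bool" where
  "lie_subalgebra g \<longleftrightarrow> module.subspace mscale g \<and> (\<forall>x\<in>g. \<forall>y\<in>g. comm x y \<in> g)"

definition brk :: "'n::finite mat set \<Rightarrow> 'n mat set \<Rightarrow> 'n mat set" where
  "brk A B = module.span mscale {comm a b | a b. a \<in> A \<and> b \<in> B}"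

definition lie_ideal :: "'n::finite mat set \<Rightarrow> 'n mat set \<Rightarrow> bool" where
  "lie_ideal I g \<longleftrightarrow> module.subspace mscale I \<and> I \<subseteq> g \<and> (\<forall>x\<in>g. \<forall>y\<in>I. comm x y \<in> I)"

fun derived_series :: "'n::finite mat set \<Rightarrow> nat \<Rightarrow> 'n mat set" where
  "derived_series L 0 = L"
| "derived_series L (Suc k) = brk (derived_series L k) (derived_series L k)"

fun lower_central_series :: "'n::finite mat set \<Rightarrow> nat \<Rightarrow> 'n mat set" where
  "lower_central_series L 0 = L"
| "lower_central_series L (Suc k) = brk L (lower_central_series L k)"

definition solvable :: "'n::finite mat set \<Rightarrow> bool" where
  "solvable L \<longleftrightarrow> (\<exists>k. derived_series L k = {0})"

definition nilpotent :: "'n::finite mat set \<Rightarrow> bool" where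
  "nilpotent L \<longleftrightarrow> (\<exists>k. lower_central_series L k = {0})"

definition semisimple :: "'n::finite mat set \<Rightarrow> bool" where
  "semisimple g \<longleftrightarrow> lie_subalgebra g \<and> (\<forall>I. lie_ideal I g \<and> solvable I \<longrightarrow> I = {0})"

definition normalizer :: "'n::finite mat set \<Rightarrow> 'n mat set \<Rightarrow> 'n mat set" where
  "normalizer g h = {x \<in> g. \<forall>y\<in>h. comm x y \<in> h}"

definition cartan_subalgebra :: "'n::finite mat set \<Rightarrow> 'n mat set \<Rightarrow> bool" where
  "cartan_subalgebra h g \<longleftrightarrow> lie_subalgebra h \<and> h \<subseteq> g \<and> nilpotent h \<and> normalizer g h = h"

definition lie_rep :: "'n::finite mat set \<Rightarrow> ('n mat \<Rightarrow> 'm::finite mat) \<Rightarrow> bool" where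
  "lie_rep g \<rho> \<longleftrightarrow>
     (\<forall>x\<in>g. \<forall>y\<in>g. \<rho> (x + y) = \<rho> x + \<rho> y) \<and>
     (\<forall>c. \<forall>x\<in>g. \<rho> (mscale c x) = mscale c (\<rho> x)) \<and>
     (\<forall>x\<in>g. \<forall>y\<in>g. \<rho> (comm x y) = comm (\<rho> x) (\<rho> y))"

definition tens :: "complex^'m \<Rightarrow> 'n::finite mat \<Rightarrow> complex^'n^'n^'m" where
  "tens w x = (\<chi> k. mscale (w$k) x)"

definition tensor_space :: "'n::finite mat set \<Rightarrow> (complex^'n^'n^'m::finite) set" where
  "tensor_space L = module.span tscale {tens w x | w x. x \<in> L}"

text \<open>Action (\<rho> \<otimes> ad)(x): on pure tensors w \<otimes> y it gives \<rho>(x)w \<otimes> y + w \<otimes> [x,y].\<close>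
definition tact :: "('n::finite mat \<Rightarrow> 'm::finite mat) \<Rightarrow> 'n mat \<Rightarrow> complex^'n^'n^'m \<Rightarrow> complex^'n^'n^'m" where
  "tact \<rho> x T = (\<chi> k. (\<Sum>j\<in>UNIV. mscale ((\<rho> x)$k$j) (T$j)) + comm x (T$k))"

definition generated_submodule ::
  "'n::finite mat set \<Rightarrow> ('n mat \<Rightarrow> 'm::finite mat) \<Rightarrow> (complex^'n^'n^'m) set \<Rightarrow> (complex^'n^'n^'m) set" where
  "generated_submodule g \<rho> X =
     \<Inter>{S. module.subspace tscale S \<and> X \<subseteq> S \<and> (\<forall>x\<in>g. \<forall>T\<in>S. tact \<rho> x T \<in> S)}"

end

theory Submission
  imports Defs
begin


lemma mscale_vs: "vector_space (mscale :: complex \<Rightarrow> 'n::finite mat \<Rightarrow> 'n mat)"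
  by unfold_locales (simp_all add: mscale_def vec_eq_iff algebra_simps)

interpretation M: vector_space "mscale :: complex \<Rightarrow> 'n::finite mat \<Rightarrow> 'n mat"
  by (rule mscale_vs)

lemma tscale_vs: "vector_space (tscale :: complex \<Rightarrow> complex^'n::finite^'n^'m::finite \<Rightarrow> _)"
  by unfold_locales (simp_all add: tscale_def mscale_def vec_eq_iff algebra_simps)

interpretation T: vector_space "tscale :: complex \<Rightarrow> complex^'n::finite^'n^'m::finite \<Rightarrow> _"
  by (rule tscale_vs)

definition emat :: "'n \<Rightarrow> 'n \<Rightarrow> 'n::finite mat" where
  "emat a b = (\<chi> i j. if i = a \<and> j = b then 1 else 0)"

lemma mat_expand: "(M::'n::finite mat) = (\<Sum>p\<in>UNIV. mscale (M$fst p$snd p) (emat (fst p) (snd p)))"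
proof -
  have "(\<Sum>p\<in>UNIV. mscale (M$fst p$snd p) (emat (fst p) (snd p))) $ i $ j = M$i$j" for i j
  proof -
    have "(\<Sum>p\<in>UNIV. mscale (M$fst p$snd p) (emat (fst p) (snd p))) $ i $ j
       = (\<Sum>p\<in>UNIV. (if p = (i,j) then M$i$j else 0))"
      unfolding sum_component by (rule sum.cong) (auto simp: mscale_def emat_def)
    also have "\<dots> = M$i$j" by simp
    finally show ?thesis .
  qed
  then show ?thesis by (simp add: vec_eq_iff)
qed

lemma finite_span_UNIV: "M.span (range (\<lambda>p. emat (fst p) (snd p))) = (UNIV :: 'n::finite mat set)"
proof -
  have "M \<in> M.span (range (\<lambda>p. emat (fst p) (snd p)))" for M :: "'n mat"
    by (subst mat_expand) (intro M.span_sum M.span_scale M.span_base, auto)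
  then show ?thesis by auto
qed

lemma ex_basis: "\<exists>B. finite B \<and> M.independent B \<and> M.span B = (UNIV :: 'n::finite mat set)"
proof -
  obtain B where B: "B \<subseteq> range (\<lambda>p. emat (fst p) (snd p) :: 'n mat)" "M.independent B"
     "range (\<lambda>p. emat (fst p) (snd p)) \<subseteq> M.span B"
    by (rule M.maximal_independent_subset)
  have "finite B" using B(1) by (rule finite_subset) simp
  moreover have "M.span B = UNIV"
    using M.span_mono[OF B(3)] finite_span_UNIV M.span_span by (metis UNIV_I subsetI subset_antisym)
  ultimately show ?thesis using B by blast
qed

definition mbasis :: "'n::finite mat set" where
  "mbasis = (SOME B. finite B \<and> M.independent B \<and> M.span B = UNIV)"

interpretation MF: finite_dimensional_vector_space "mscale :: complex \<Rightarrow> 'n::finite mat \<Rightarrow> 'n mat" mbasis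
proof -
  have "finite (mbasis :: 'n mat set) \<and> M.independent (mbasis :: 'n mat set) \<and> M.span (mbasis :: 'n mat set) = UNIV"
    unfolding mbasis_def by (rule someI_ex, rule ex_basis)
  then show "finite_dimensional_vector_space (mscale :: complex \<Rightarrow> 'n::finite mat \<Rightarrow> 'n mat) mbasis"
    by unfold_locales auto
qed



lemma mm_add_r: "((A::'n::finite mat) + B) ** C = A ** C + B ** C"
  by (vector matrix_matrix_mult_def sum.distrib[symmetric] field_simps)
lemma mm_diff_r: "((A::'n::finite mat) - B) ** C = A ** C - B ** C"
  by (vector matrix_matrix_mult_def sum_subtractf[symmetric] field_simps)
lemma mm_diff_l: "(A::'n::finite mat) ** (B - C) = A ** B - A ** C"
  by (vector matrix_matrix_mult_def sum_subtractf[symmetric] field_simps)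
lemma mm_scale_l: "mscale c (A::'n::finite mat) ** B = mscale c (A ** B)"
  by (vector matrix_matrix_mult_def mscale_def sum_distrib_left field_simps)
lemma mm_scale_r: "(A::'n::finite mat) ** mscale c B = mscale c (A ** B)"
  by (vector matrix_matrix_mult_def mscale_def sum_distrib_left field_simps)

lemma comm_anti: "comm a b = - comm b a" by (simp add: comm_def)
lemma comm_add_r: "comm x (a + b) = comm x a + comm x b"
  by (simp add: comm_def matrix_add_ldistrib mm_add_r)
lemma comm_add_l: "comm (a + b) x = comm a x + comm b x"
  by (simp add: comm_anti[of "a+b"] comm_anti[of a] comm_anti[of b] comm_add_r)
lemma comm_scale_r: "comm x (mscale c a) = mscale c (comm x a)"
  by (simp add: comm_def mm_scale_l mm_scale_r M.scale_right_diff_distrib)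
lemma comm_scale_l: "comm (mscale c a) x = mscale c (comm a x)"
  by (simp add: comm_def mm_scale_l mm_scale_r M.scale_right_diff_distrib)
lemma comm_zero_r[simp]: "comm x 0 = 0" by (simp add: comm_def)
lemma comm_zero_l[simp]: "comm 0 x = 0" by (simp add: comm_def)
lemma comm_diff_r: "comm x (a - b) = comm x a - comm x b"
  by (simp add: comm_def mm_diff_l mm_diff_r)
lemma jacobi: "comm x (comm y v) = comm y (comm x v) + comm (comm x y) (v::'n::finite mat)"
  by (simp add: comm_def mm_diff_l mm_diff_r matrix_mul_assoc algebra_simps)

lemma comm_linear: "Vector_Spaces.linear mscale mscale (comm (x::'n::finite mat))"
  unfolding Vector_Spaces.linear_iff using mscale_vs by (simp add: comm_add_r comm_scale_r)

lemma comm_pow_linear: "Vector_Spaces.linear mscale mscale (comm (x::'n::finite mat) ^^ k)"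
proof (induction k)
  case 0
  then show ?case using M.linear_id by (simp add: id_def)
next
  case (Suc k)
  then show ?case unfolding funpow.simps by (rule Vector_Spaces.linear_compose[OF _ comm_linear])
qed



abbreviation LCS where "LCS \<equiv> lower_central_series"

lemma lcs_sub:
  assumes "lie_subalgebra (h::'n::finite mat set)"
  shows "M.subspace (LCS h i) \<and> LCS h i \<subseteq> h"
proof (induction i)
  case 0 thus ?case using assms by (simp add: lie_subalgebra_def)
next
  case (Suc i)
  have "M.span {comm a b | a b. a \<in> h \<and> b \<in> LCS h i} \<subseteq> h"
    by (rule M.span_minimal) (use Suc assms in \<open>auto simp: lie_subalgebra_def\<close>)
  then show ?case by (simp add: brk_def)
qed

lemma lcs_step: "a \<in> h \<Longrightarrow> b \<in> LCS h i \<Longrightarrow> comm a b \<in> LCS h (Suc i)"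
  by (simp add: brk_def) (rule M.span_base, blast)

lemma lcs_mono:
  assumes "lie_subalgebra (h::'n::finite mat set)"
  shows "LCS h (Suc i) \<subseteq> LCS h i"
proof (induction i)
  case 0 thus ?case using lcs_sub[OF assms, of 1] by simp
next
  case (Suc i)
  have "{comm a b | a b. a \<in> h \<and> b \<in> LCS h (Suc i)} \<subseteq> {comm a b | a b. a \<in> h \<and> b \<in> LCS h i}"
    using Suc by blast
  then show ?case by (simp only: lower_central_series.simps brk_def) (rule M.span_mono)
qed

lemma lcs_pow: "x \<in> h \<Longrightarrow> y \<in> h \<Longrightarrow> (comm x ^^ i) y \<in> LCS h i"
proof (induction i)
  case (Suc i)
  then show ?case using lcs_step[of x h "(comm x ^^ i) y" i] by simp
qed simp

lemma comm_first_subspace: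
  assumes "M.subspace (h::'n::finite mat set)"
  shows "M.subspace {x. comm x v \<in> h}"
  by (rule M.subspaceI) (use assms in \<open>auto simp: comm_add_l comm_scale_l M.subspace_add M.subspace_scale M.subspace_0\<close>)

lemma engel_step:
  fixes h :: "'n::finite mat set"
  assumes hs: "lie_subalgebra h"
    and Einv: "\<forall>x\<in>h. \<forall>v\<in>E. comm x v \<in> E"
    and Enil: "\<forall>x\<in>h. \<forall>v\<in>E. \<exists>k. (comm x ^^ k) v = 0"
    and Q: "\<exists>w\<in>E. w \<notin> h \<and> (\<forall>x\<in>K. comm x w \<in> h)"
    and Kh: "K \<subseteq> h" and z: "z \<in> h" and Kz: "\<forall>y\<in>K. comm z y \<in> M.span K"
  shows "\<exists>w\<in>E. w \<notin> h \<and> (\<forall>x\<in>insert z K. comm x w \<in> h)"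
proof -
  from hs have hsub: "M.subspace h" and hcl: "\<forall>x\<in>h. \<forall>y\<in>h. comm x y \<in> h"
    by (auto simp: lie_subalgebra_def)
  define V where "V = {v\<in>E. \<forall>x\<in>K. comm x v \<in> h}"
  have Vsp: "comm x v \<in> h" if "v \<in> V" "x \<in> M.span K" for x v
  proof -
    have "K \<subseteq> {x. comm x v \<in> h}" using that by (auto simp: V_def)
    then have "M.span K \<subseteq> {x. comm x v \<in> h}"
      by (rule M.span_minimal[OF _ comm_first_subspace[OF hsub]])
    then show ?thesis using that by blast
  qed
  have Vinv: "comm z v \<in> V" if "v \<in> V" for v
  proof -
    have vE: "v \<in> E" using that by (simp add: V_def)
    have "comm y (comm z v) \<in> h" if y: "y \<in> K" for y
    proof -
      have "comm y v \<in> h" using \<open>v \<in> V\<close> y by (simp add: V_def)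
      then have 1: "comm z (comm y v) \<in> h" using hcl z by blast
      have "- comm z y \<in> M.span K" using Kz y M.span_neg by blast
      then have "comm (- comm z y) v \<in> h" using Vsp \<open>v \<in> V\<close> by blast
      then have 2: "comm (comm y z) v \<in> h" using comm_anti[of y z] by simp
      show ?thesis using jacobi[of y z v] M.subspace_add[OF hsub 1 2] by simp
    qed
    then show ?thesis using Einv z vE by (simp add: V_def)
  qed
  have Vpow: "(comm z ^^ k) v \<in> V" if "v \<in> V" for v k
    using that by (induction k) (simp_all add: Vinv)
  obtain w where w: "w \<in> V" "w \<notin> h" using Q by (auto simp: V_def)
  have "\<exists>k0. (comm z ^^ k0) w = 0" using Enil z w(1) by (auto simp: V_def)
  then obtain k0 where "(comm z ^^ k0) w = 0" by blast
  then have ex: "\<exists>k. (comm z ^^ k) w \<in> h" using M.subspace_0[OF hsub] by metis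
  define k where "k = (LEAST k. (comm z ^^ k) w \<in> h)"
  have hk: "(comm z ^^ k) w \<in> h" unfolding k_def by (rule LeastI_ex[OF ex])
  have k0: "k \<noteq> 0"
  proof
    assume "k = 0" then show False using hk w(2) by simp
  qed
  define w' where "w' = (comm z ^^ (k - 1)) w"
  have w'h: "w' \<notin> h" unfolding w'_def k_def
    by (rule not_less_Least) (use k0 k_def in simp)
  have "comm z w' = (comm z ^^ k) w"
    using k0 unfolding w'_def by (metis Suc_pred' funpow.simps(2) neq0_conv o_apply)
  then have zw': "comm z w' \<in> h" using hk by simp
  have w'V: "w' \<in> V" unfolding w'_def using w(1) by (rule Vpow)
  show ?thesis
    using w'V w'h zw' by (auto simp: V_def)
qed



lemma engel:
  fixes h :: "'n::finite mat set"
  assumes hs: "lie_subalgebra h" and nil: "nilpotent h"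
    and Einv: "\<forall>x\<in>h. \<forall>v\<in>E. comm x v \<in> E"
    and Enil: "\<forall>x\<in>h. \<forall>v\<in>E. \<exists>k. (comm x ^^ k) v = 0"
    and v0: "v0 \<in> E" "v0 \<notin> h"
  shows "\<exists>w\<in>E. w \<notin> h \<and> (\<forall>x\<in>h. comm x w \<in> h)"
proof -
  let ?Q = "\<lambda>K. \<exists>w\<in>E. w \<notin> h \<and> (\<forall>x\<in>K. comm x w \<in> h)"
  from hs have hsub: "M.subspace h" by (simp add: lie_subalgebra_def)
  have anti: "?Q K'" if "?Q K" "K' \<subseteq> K" for K K' using that by blast
  have spanQ: "?Q (M.span K)" if Qk: "?Q K" for K
  proof -
    obtain w where w: "w \<in> E" "w \<notin> h" "\<forall>x\<in>K. comm x w \<in> h" using Qk by blast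
    have "M.span K \<subseteq> {x. comm x w \<in> h}"
      by (rule M.span_minimal[OF _ comm_first_subspace[OF hsub]]) (use w in auto)
    then show ?thesis using w by blast
  qed
  have step: "?Q (LCS h i)" if Qs: "?Q (LCS h (Suc i))" for i
  proof -
    obtain B where B: "B \<subseteq> LCS h i" "M.independent B" "LCS h i \<subseteq> M.span B"
      by (rule M.maximal_independent_subset)
    have fB: "finite B" using B(2) by (rule MF.finiteI_independent)
    have sub_i: "LCS h i \<subseteq> h" using lcs_sub[OF hs] by blast
    have mono_i: "LCS h (Suc i) \<subseteq> LCS h i" by (rule lcs_mono[OF hs])
    have fin: "?Q (LCS h (Suc i) \<union> Z)" if "finite Z" "Z \<subseteq> LCS h i" for Z
      using that
    proof (induction Z rule: finite_induct)
      case empty then show ?case using Qs by simp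
    next
      case (insert z Z)
      have zi: "z \<in> LCS h i" and Zi: "Z \<subseteq> LCS h i" using insert.prems by auto
      have IH: "?Q (LCS h (Suc i) \<union> Z)" using insert.IH Zi by blast
      have Kh: "LCS h (Suc i) \<union> Z \<subseteq> h" using Zi mono_i sub_i by blast
      have zh: "z \<in> h" using zi sub_i by blast
      have Kz: "\<forall>y\<in>LCS h (Suc i) \<union> Z. comm z y \<in> M.span (LCS h (Suc i) \<union> Z)"
      proof
        fix y assume "y \<in> LCS h (Suc i) \<union> Z"
        then have "y \<in> LCS h i" using Zi mono_i by blast
        then have "comm z y \<in> LCS h (Suc i)" using lcs_step zh by blast
        then show "comm z y \<in> M.span (LCS h (Suc i) \<union> Z)" by (simp add: M.span_base)
      qed
      have "?Q (insert z (LCS h (Suc i) \<union> Z))"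
        by (rule engel_step[OF hs Einv Enil IH Kh zh Kz])
      then show ?case by simp
    qed
    have "?Q (M.span (LCS h (Suc i) \<union> B))" using fin[OF fB B(1)] by (rule spanQ)
    moreover have "LCS h i \<subseteq> M.span (LCS h (Suc i) \<union> B)"
      using B(3) M.span_mono[of B "LCS h (Suc i) \<union> B"] by blast
    ultimately show ?thesis by (rule anti)
  qed
  obtain c where c: "LCS h c = {0}" using nil unfolding nilpotent_def by blast
  have Qc: "?Q (LCS h c)" using v0 c M.subspace_0[OF hsub] by auto
  have "?Q (LCS h (c - d))" for d
  proof (induction d)
    case 0 then show ?case using Qc by simp
  next
    case (Suc d)
    show ?case
    proof (cases "d < c")
      case True
      then have "c - d = Suc (c - Suc d)" by simp
      then have "?Q (LCS h (Suc (c - Suc d)))" using Suc.IH by simp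
      then show ?thesis by (rule step)
    next
      case False
      then have "c - Suc d = c - d" by simp
      then show ?thesis using Suc by simp
    qed
  qed
  from this[of c] show ?thesis by simp
qed



lemma pow_hom: "module_hom mscale mscale (comm (x::'n::finite mat) ^^ k)"
  using comm_pow_linear by (simp add: module_hom_iff_linear)

lemma pow_inv: "\<forall>v\<in>E. comm x v \<in> E \<Longrightarrow> v \<in> E \<Longrightarrow> (comm x ^^ k) v \<in> E"
  by (induction k) auto

lemma pow_zero_mono:
  assumes "(comm (x::'n::finite mat) ^^ k) v = 0" "k \<le> n"
  shows "(comm x ^^ n) v = 0"
proof -
  have "n = (n - k) + k" using assms(2) by simp
  then have "(comm x ^^ n) v = (comm x ^^ (n - k)) ((comm x ^^ k) v)"
    by (metis funpow_add o_apply)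
  then show ?thesis using assms(1) module_hom.zero[OF pow_hom] by simp
qed

lemma fitting:
  fixes x :: "'n::finite mat"
  assumes Esub: "M.subspace E" and Einv: "\<forall>v\<in>E. comm x v \<in> E"
  shows "\<exists>K>0. (comm x ^^ K) ` E = (comm x ^^ (K + K)) ` E"
proof -
  define I where "I = (\<lambda>k. (comm x ^^ k) ` E)"
  have Isub: "M.subspace (I k)" for k
    unfolding I_def using module_hom.subspace_image[OF pow_hom Esub] .
  have Isuc: "I (Suc k) = comm x ` I k" for k
    unfolding I_def by (simp only: funpow.simps(2) image_comp)
  have Idec: "I (Suc k) \<subseteq> I k" for k
  proof
    fix y assume "y \<in> I (Suc k)"
    then obtain v where v: "v \<in> E" "y = (comm x ^^ Suc k) v" unfolding I_def by blast
    have "y = (comm x ^^ k) (comm x v)" using v(2) by (metis funpow_Suc_right o_apply)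
    then show "y \<in> I k" using Einv v(1) unfolding I_def by blast
  qed
  have ex: "\<exists>k. I (Suc k) = I k"
  proof (rule ccontr)
    assume na: "\<not> ?thesis"
    have lt: "M.dim (I (Suc k)) < M.dim (I k)" for k
    proof -
      have "I (Suc k) \<subset> I k" using Idec[of k] na by blast
      then have "M.span (I (Suc k)) \<subset> M.span (I k)" using Isub M.span_eq_iff by metis
      then show ?thesis by (rule MF.dim_psubset)
    qed
    have "M.dim (I k) + k \<le> M.dim (I 0)" for k
    proof (induction k)
      case (Suc k) then show ?case using lt[of k] by simp
    qed simp
    from this[of "Suc (M.dim (I 0))"] show False by simp
  qed
  then obtain k where k: "I (Suc k) = I k" by blast
  have stab: "I (k + j) = I k" for j
  proof (induction j)
    case (Suc j)
    have "I (k + Suc j) = comm x ` I (k + j)" using Isuc[of "k + j"] by simp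
    also have "\<dots> = I k" using Suc Isuc[of k] k by simp
    finally show ?case .
  qed simp
  have "I (Suc k) = I (Suc k + Suc k)" using stab[of "Suc (Suc k)"] stab[of 1] by simp
  then show ?thesis unfolding I_def by blast
qed

lemma gen_ker_sub:
  assumes Esub: "M.subspace E"
  shows "M.subspace {v\<in>E. \<exists>k. (comm (x::'n::finite mat) ^^ k) v = 0}"
proof (rule M.subspaceI)
  show "0 \<in> {v\<in>E. \<exists>k. (comm x ^^ k) v = 0}" using M.subspace_0[OF Esub] by (auto intro!: exI[of _ 0])
next
  fix a b assume a: "a \<in> {v\<in>E. \<exists>k. (comm x ^^ k) v = 0}" and b: "b \<in> {v\<in>E. \<exists>k. (comm x ^^ k) v = 0}"
  then obtain k1 k2 where k: "(comm x ^^ k1) a = 0" "(comm x ^^ k2) b = 0" by blast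
  have "(comm x ^^ (k1 + k2)) (a + b) = 0"
    using pow_zero_mono[OF k(1), of "k1 + k2"] pow_zero_mono[OF k(2), of "k1 + k2"]
      module_hom.add[OF pow_hom, of "k1 + k2" x a b] by simp
  then show "a + b \<in> {v\<in>E. \<exists>k. (comm x ^^ k) v = 0}" using a b M.subspace_add[OF Esub] by blast
next
  fix c a assume a: "a \<in> {v\<in>E. \<exists>k. (comm x ^^ k) v = 0}"
  then obtain k where k: "(comm x ^^ k) a = 0" by blast
  have "(comm x ^^ k) (mscale c a) = 0"
    using k module_hom.scale[OF pow_hom, of k x c a] by simp
  then show "mscale c a \<in> {v\<in>E. \<exists>k. (comm x ^^ k) v = 0}" using a M.subspace_scale[OF Esub] by blast
qed



lemma gen_ker_inv:
  fixes h :: "'n::finite mat set"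
  assumes hs: "lie_subalgebra h" and nil: "nilpotent h" and x: "x \<in> h"
    and Esub: "M.subspace E" and Einv: "\<forall>y\<in>h. \<forall>v\<in>E. comm y v \<in> E"
    and y: "y \<in> h" and u: "u \<in> {v\<in>E. \<exists>k. (comm x ^^ k) v = 0}"
  shows "comm y u \<in> {v\<in>E. \<exists>k. (comm x ^^ k) v = 0}"
proof -
  define E0 where "E0 = {v\<in>E. \<exists>k. (comm x ^^ k) v = 0}"
  have E0sub: "M.subspace E0" unfolding E0_def by (rule gen_ker_sub[OF Esub])
  from hs have hcl: "\<forall>a\<in>h. \<forall>b\<in>h. comm a b \<in> h" by (simp add: lie_subalgebra_def)
  obtain c where c: "LCS h c = {0}" using nil unfolding nilpotent_def by blast
  have yih: "(comm x ^^ i) y \<in> h" for i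
    by (induction i) (use y x hcl in auto)
  have yc: "(comm x ^^ c) y = 0" using lcs_pow[OF x y, of c] c by simp
  have P: "\<forall>v\<in>E0. comm ((comm x ^^ (c - d)) y) v \<in> E0" for d
  proof (induction d)
    case 0
    then show ?case using yc M.subspace_0[OF E0sub] by simp
  next
    case (Suc d)
    show ?case
    proof (cases "d < c")
      case False
      then have "c - Suc d = c - d" by simp
      then show ?thesis using Suc.IH by simp
    next
      case True
      define i where "i = c - Suc d"
      have ci: "c - d = Suc i" using True unfolding i_def by simp
      define yi where "yi = (comm x ^^ i) y"
      have yih': "yi \<in> h" unfolding yi_def by (rule yih)
      have IH: "\<forall>v\<in>E0. comm (comm x yi) v \<in> E0" using Suc.IH ci unfolding yi_def by simp
      have main: "comm yi v \<in> E0" if "v \<in> E" "(comm x ^^ k) v = 0" for k v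
        using that
      proof (induction k arbitrary: v)
        case 0
        then show ?case using M.subspace_0[OF E0sub] by simp
      next
        case (Suc k)
        have vE: "v \<in> E" by fact
        have Av: "comm x v \<in> E" using Einv x vE by blast
        have "(comm x ^^ k) (comm x v) = 0" using Suc.prems(2) by (metis funpow_Suc_right o_apply)
        then have 1: "comm yi (comm x v) \<in> E0" using Suc.IH Av by blast
        have vE0: "v \<in> E0" unfolding E0_def using vE Suc.prems(2) by blast
        have 2: "comm (comm x yi) v \<in> E0" using IH vE0 by blast
        have "comm x (comm yi v) \<in> E0"
          using jacobi[of x yi v] M.subspace_add[OF E0sub 1 2] by simp
        then obtain j where j: "(comm x ^^ j) (comm x (comm yi v)) = 0" unfolding E0_def by blast
        have "(comm x ^^ Suc j) (comm yi v) = 0" using j by (metis funpow_Suc_right o_apply)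
        moreover have "comm yi v \<in> E" using Einv yih' vE by blast
        ultimately show ?case unfolding E0_def by blast
      qed
      have "\<forall>v\<in>E0. comm yi v \<in> E0" using main unfolding E0_def by blast
      then show ?thesis unfolding yi_def i_def by simp
    qed
  qed
  from P[of c] show ?thesis using u unfolding E0_def by simp
qed

lemma main_lie:
  fixes g h :: "'n::finite mat set"
  assumes hs: "lie_subalgebra h" and nil: "nilpotent h" and hg: "h \<subseteq> g"
    and norm: "normalizer g h = h"
  shows "M.subspace E \<Longrightarrow> E \<subseteq> g \<Longrightarrow> \<forall>x\<in>h. \<forall>v\<in>E. comm x v \<in> E \<Longrightarrow>
    E \<subseteq> M.span (h \<union> {comm x v | x v. x \<in> h \<and> v \<in> E})"
proof (induction "M.dim E" arbitrary: E rule: less_induct)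
  case less
  note Esub = less.prems(1) and Eg = less.prems(2) and Einv = less.prems(3)
  from hs have hsub: "M.subspace h" by (simp add: lie_subalgebra_def)
  show ?case
  proof (cases "\<forall>x\<in>h. \<forall>v\<in>E. \<exists>k. (comm x ^^ k) v = 0")
    case True
    have "E \<subseteq> h"
    proof (rule ccontr)
      assume "\<not> E \<subseteq> h"
      then obtain v0 where v0: "v0 \<in> E" "v0 \<notin> h" by blast
      obtain w where w: "w \<in> E" "w \<notin> h" "\<forall>x\<in>h. comm x w \<in> h"
        using engel[OF hs nil Einv True v0] by blast
      have "\<forall>y\<in>h. comm w y \<in> h"
      proof
        fix y assume "y \<in> h"
        then have "- comm y w \<in> h" using w(3) M.subspace_neg[OF hsub] by blast
        then show "comm w y \<in> h" using comm_anti[of w y] by simp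
      qed
      then have "w \<in> normalizer g h" unfolding normalizer_def using w(1) Eg by blast
      then show False using norm w(2) by simp
    qed
    then show ?thesis using M.span_superset by blast
  next
    case False
    then obtain x v1 where x: "x \<in> h" and v1: "v1 \<in> E" and nz: "\<forall>k. (comm x ^^ k) v1 \<noteq> 0"
      by blast
    define S where "S = M.span (h \<union> {comm x v | x v. x \<in> h \<and> v \<in> E})"
    define E0 where "E0 = {v\<in>E. \<exists>k. (comm x ^^ k) v = 0}"
    have E0sub: "M.subspace E0" unfolding E0_def by (rule gen_ker_sub[OF Esub])
    have E0E: "E0 \<subseteq> E" unfolding E0_def by blast
    have "v1 \<notin> E0" using nz unfolding E0_def by blast
    then have "E0 \<subset> E" using E0E v1 by blast
    then have "M.span E0 \<subset> M.span E" using E0sub Esub M.span_eq_iff by metis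
    then have dimlt: "M.dim E0 < M.dim E" by (rule MF.dim_psubset)
    have E0inv: "\<forall>y\<in>h. \<forall>v\<in>E0. comm y v \<in> E0"
      using gen_ker_inv[OF hs nil x Esub Einv] unfolding E0_def by blast
    have "E0 \<subseteq> M.span (h \<union> {comm x v | x v. x \<in> h \<and> v \<in> E0})"
      using less.hyps[OF dimlt E0sub _ E0inv] E0E Eg by blast
    also have "\<dots> \<subseteq> S" unfolding S_def by (rule M.span_mono) (use E0E in blast)
    finally have E0S: "E0 \<subseteq> S" .
    have Einvx: "\<forall>v\<in>E. comm x v \<in> E" using Einv x by blast
    obtain K where K: "K > 0" "(comm x ^^ K) ` E = (comm x ^^ (K + K)) ` E"
      using fitting[OF Esub Einvx] by blast
    show "E \<subseteq> S"
    proof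
      fix v assume v: "v \<in> E"
      have "(comm x ^^ K) v \<in> (comm x ^^ (K + K)) ` E" using K(2) v by blast
      then obtain u where u: "u \<in> E" "(comm x ^^ K) v = (comm x ^^ (K + K)) u" by blast
      define a where "a = (comm x ^^ K) u"
      have aE: "a \<in> E" unfolding a_def using pow_inv[OF Einvx u(1)] .
      have "(comm x ^^ (K + K)) u = (comm x ^^ K) a" unfolding a_def by (simp add: funpow_add)
      then have "(comm x ^^ K) (v - a) = 0"
        using u(2) module_hom.diff[OF pow_hom, of K x v a] by simp
      then have "v - a \<in> E0" unfolding E0_def using M.subspace_diff[OF Esub v aE] by blast
      then have 1: "v - a \<in> S" using E0S by blast
      have "a = comm x ((comm x ^^ (K - 1)) u)" unfolding a_def using K(1)
        by (metis Suc_pred' funpow.simps(2) o_apply)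
      moreover have "(comm x ^^ (K - 1)) u \<in> E" using pow_inv[OF Einvx u(1)] .
      ultimately have 2: "a \<in> S" unfolding S_def using x by (intro M.span_base) blast
      have "v = (v - a) + a" by simp
      moreover have "(v - a) + a \<in> S" using 1 2 unfolding S_def by (rule M.span_add)
      ultimately show "v \<in> S" by simp
    qed
  qed
qed



lemma tens_add: "tens w (a + b) = tens w a + tens w b"
  by (simp add: tens_def vec_eq_iff M.scale_right_distrib)
lemma tens_scale: "tens w (mscale c a) = tscale c (tens w a)"
  by (simp add: tens_def tscale_def vec_eq_iff M.scale_left_commute mult.commute)
lemma tens_neg: "tens w (- a) = - tens w a"
  by (simp add: tens_def vec_eq_iff mscale_def)

lemma sum_mscale: "(\<Sum>j\<in>A. mscale (c j) M) = mscale (\<Sum>j\<in>A. c j) (M::'n::finite mat)"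
  by (simp add: vec_eq_iff sum_component mscale_def sum_distrib_right)

lemma tact_tens:
  "tact \<rho> x (tens w y) = tens (\<rho> x *v w) y + tens w (comm x y)"
proof -
  have "tact \<rho> x (tens w y) $ k = (tens (\<rho> x *v w) y + tens w (comm x y)) $ k" for k
  proof -
    have "(\<Sum>j\<in>UNIV. mscale (\<rho> x $ k $ j) (tens w y $ j)) = (\<Sum>j\<in>UNIV. mscale (\<rho> x $ k $ j * w $ j) y)"
      by (simp add: tens_def)
    also have "\<dots> = mscale ((\<rho> x *v w) $ k) y"
      by (simp add: sum_mscale matrix_vector_mult_def)
    finally show ?thesis by (simp add: tact_def tens_def comm_scale_r)
  qed
  then show ?thesis by (simp add: vec_eq_iff)
qed

lemma tact_add: "tact \<rho> x (A + B) = tact \<rho> x A + tact \<rho> x B"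
  by (simp add: tact_def vec_eq_iff M.scale_right_distrib sum.distrib comm_add_r algebra_simps)

lemma tact_scale: "tact \<rho> x (tscale c A) = tscale c (tact \<rho> x A)"
proof -
  have "tact \<rho> x (tscale c A) $ k = tscale c (tact \<rho> x A) $ k" for k
    by (simp add: tact_def tscale_def M.scale_right_distrib M.scale_sum_right M.scale_left_commute comm_scale_r mult.commute)
  then show ?thesis by (simp add: vec_eq_iff)
qed



lemma tens_zero: "tens w (0::'n::finite mat) = (0 :: complex^'n^'n^'m::finite)"
  by (simp add: tens_def mscale_def vec_eq_iff)

theorem lemma3p8:
  fixes g h :: "'n::finite mat set" and \<rho> :: "'n mat \<Rightarrow> 'm::finite mat"
  assumes "semisimple g"
    and "cartan_subalgebra h g"
    and "lie_rep g \<rho>"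
  shows "generated_submodule g \<rho> (tensor_space h :: (complex^'n^'n^'m) set)
           = tensor_space g"
proof -
  have gs: "lie_subalgebra g" using assms(1) by (simp add: semisimple_def)
  have hs: "lie_subalgebra h" and hg: "h \<subseteq> g" and nil: "nilpotent h" and norm: "normalizer g h = h"
    using assms(2) by (auto simp: cartan_subalgebra_def)
  have gsub: "M.subspace g" and gcl: "\<forall>x\<in>g. \<forall>y\<in>g. comm x y \<in> g"
    using gs by (auto simp: lie_subalgebra_def)
  let ?TG = "tensor_space g :: (complex^'n^'n^'m) set"
  let ?TH = "tensor_space h :: (complex^'n^'n^'m) set"
  have closed: "tact \<rho> x T \<in> ?TG" if x: "x \<in> g" and T: "T \<in> ?TG" for x T
  proof -
    have "T \<in> T.span {tens w y | w y. y \<in> g}" using T by (simp add: tensor_space_def)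
    then show ?thesis
    proof (induction rule: T.span_induct)
      case base
      show ?case
      proof (rule T.subspaceI)
        show "0 \<in> Collect (\<lambda>T. tact \<rho> x T \<in> ?TG)"
          using tact_scale[of \<rho> x 0 0] T.subspace_0[of ?TG] by (simp add: tensor_space_def)
      next
        fix A B assume "A \<in> Collect (\<lambda>T. tact \<rho> x T \<in> ?TG)" "B \<in> Collect (\<lambda>T. tact \<rho> x T \<in> ?TG)"
        then show "A + B \<in> Collect (\<lambda>T. tact \<rho> x T \<in> ?TG)"
          by (simp add: tact_add tensor_space_def T.span_add)
      next
        fix c A assume "A \<in> Collect (\<lambda>T. tact \<rho> x T \<in> ?TG)"
        then show "tscale c A \<in> Collect (\<lambda>T. tact \<rho> x T \<in> ?TG)"
          by (simp add: tact_scale tensor_space_def T.span_scale)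
      qed
    next
      case (step S)
      then obtain w y where S: "S = tens w y" "y \<in> g" by blast
      have 1: "tens (\<rho> x *v w) y \<in> ?TG" unfolding tensor_space_def
        by (rule T.span_base) (use S in blast)
      have 2: "tens w (comm x y) \<in> ?TG" unfolding tensor_space_def
        by (rule T.span_base) (use S x gcl in blast)
      show ?case using T.span_add[OF 1[unfolded tensor_space_def] 2[unfolded tensor_space_def]]
        by (simp add: S tact_tens tensor_space_def)
    qed
  qed
  have THG: "?TH \<subseteq> ?TG" unfolding tensor_space_def
    by (rule T.span_mono) (use hg in blast)
  have sub1: "generated_submodule g \<rho> ?TH \<subseteq> ?TG"
    unfolding generated_submodule_def
    by (rule Inter_lower) (use THG closed in \<open>auto simp: tensor_space_def\<close>)
  have span_g: "g \<subseteq> M.span (h \<union> {comm x v | x v. x \<in> h \<and> v \<in> g})"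
    by (rule main_lie[OF hs nil hg norm gsub]) (use gcl hg in auto)
  have sub2: "?TG \<subseteq> S" if Ssub: "T.subspace S" and HS: "?TH \<subseteq> S"
    and Sinv: "\<forall>x\<in>g. \<forall>T\<in>S. tact \<rho> x T \<in> S" for S
  proof -
    define G where "G = {y. \<forall>w. tens w y \<in> S}"
    have Gsub: "M.subspace G"
    proof (rule M.subspaceI)
      show "0 \<in> G" unfolding G_def using T.subspace_0[OF Ssub] by (simp add: tens_zero)
    next
      fix a b assume "a \<in> G" "b \<in> G" then show "a + b \<in> G"
        unfolding G_def by (simp add: tens_add T.subspace_add[OF Ssub])
    next
      fix c a assume "a \<in> G" then show "mscale c a \<in> G"
        unfolding G_def by (simp add: tens_scale T.subspace_scale[OF Ssub])
    qed
    have hG: "h \<subseteq> G"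
    proof
      fix y assume "y \<in> h"
      then have "tens w y \<in> ?TH" for w unfolding tensor_space_def by (intro T.span_base) blast
      then show "y \<in> G" unfolding G_def using HS by blast
    qed
    have cG: "comm a v \<in> G" if a: "a \<in> h" and v: "v \<in> g" for a v
    proof -
      have "tens w (comm v a) \<in> S" for w
      proof -
        have ta: "tens w a \<in> S" "tens (\<rho> v *v w) a \<in> S" using hG a unfolding G_def by auto
        have "tact \<rho> v (tens w a) \<in> S" using Sinv v ta(1) by blast
        then have "tens (\<rho> v *v w) a + tens w (comm v a) \<in> S" by (simp add: tact_tens)
        from T.subspace_diff[OF Ssub this ta(2)] show ?thesis by simp
      qed
      then have "tens w (comm a v) \<in> S" for w
        using T.subspace_neg[OF Ssub] comm_anti[of a v] tens_neg by metis
      then show ?thesis unfolding G_def by blast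
    qed
    have "M.span (h \<union> {comm x v | x v. x \<in> h \<and> v \<in> g}) \<subseteq> G"
      by (rule M.span_minimal[OF _ Gsub]) (use hG cG in blast)
    then have gG: "g \<subseteq> G" using span_g by blast
    show ?thesis unfolding tensor_space_def
      by (rule T.span_minimal[OF _ Ssub]) (use gG in \<open>auto simp: G_def\<close>)
  qed
  have "?TG \<subseteq> generated_submodule g \<rho> ?TH"
    unfolding generated_submodule_def by (rule Inter_greatest) (use sub2 in blast)
  with sub1 show ?thesis by blast
qed


end
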